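(* For every $n\ge 2$, the operator system $C(S^1)^{(n)}$ of $n\times n$ complex Toeplitz matrices is hyperrigid in $M_n(\mathbb C)$.
   Context: $C(S^1)^{(n)}\subseteq M_n(\mathbb C)$ is the set of Toeplitz matrices $[\tau_{k-\ell}]_{k,\ell=0}^{n-1}$. An operator subsystem $\mathcal R$ of a unital C$^*$-algebra $\mathcal A$ is hyperrigid in $\mathcal A$ if, for every representation $\pi:\mathcal A\to B(\mathcal H_\pi)$, the unital completely positive map $\pi|_{\mathcal R}$ has a unique extension to a completely positive linear map on $\mathcal A$ (namely $\pi$ itself). *)

theory Defs
  imports Complex_Main "Jordan_Normal_Form.Schur_Decomposition"
begin

text \<open>A complex Hilbert space structure on the additive group 'h: complex scalar
  multiplication sc and inner product ip (linear in the first argument),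
  complete w.r.t. the induced norm.\<close>

definition hnorm :: "('h \<Rightarrow> 'h \<Rightarrow> complex) \<Rightarrow> 'h \<Rightarrow> real" where
  "hnorm ip x = sqrt (Re (ip x x))"

definition complex_hilbert_space ::
  "(complex \<Rightarrow> 'h::ab_group_add \<Rightarrow> 'h) \<Rightarrow> ('h \<Rightarrow> 'h \<Rightarrow> complex) \<Rightarrow> bool" where
  "complex_hilbert_space sc ip \<longleftrightarrow>
     (\<forall>a x y. sc a (x + y) = sc a x + sc a y) \<and>
     (\<forall>a b x. sc (a + b) x = sc a x + sc b x) \<and>
     (\<forall>a b x. sc a (sc b x) = sc (a * b) x) \<and>
     (\<forall>x. sc 1 x = x) \<and>
     (\<forall>x y z. ip (x + y) z = ip x z + ip y z) \<and>
     (\<forall>a x y. ip (sc a x) y = a * ip x y) \<and>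
     (\<forall>x y. ip y x = cnj (ip x y)) \<and>
     (\<forall>x. Im (ip x x) = 0 \<and> Re (ip x x) \<ge> 0) \<and>
     (\<forall>x. ip x x = 0 \<longrightarrow> x = 0) \<and>
     (\<forall>X :: nat \<Rightarrow> 'h.
        (\<forall>e>0. \<exists>N. \<forall>m\<ge>N. \<forall>k\<ge>N. hnorm ip (X m - X k) < e) \<longrightarrow>
        (\<exists>L. \<forall>e>0. \<exists>N. \<forall>m\<ge>N. hnorm ip (X m - L) < e))"

definition bounded_op ::
  "(complex \<Rightarrow> 'h::ab_group_add \<Rightarrow> 'h) \<Rightarrow> ('h \<Rightarrow> 'h \<Rightarrow> complex) \<Rightarrow> ('h \<Rightarrow> 'h) \<Rightarrow> bool" where
  "bounded_op sc ip T \<longleftrightarrow>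
     (\<forall>x y. T (x + y) = T x + T y) \<and>
     (\<forall>a x. T (sc a x) = sc a (T x)) \<and>
     (\<exists>K. \<forall>x. hnorm ip (T x) \<le> K * hnorm ip x)"

definition is_adjoint :: "('h \<Rightarrow> 'h \<Rightarrow> complex) \<Rightarrow> ('h \<Rightarrow> 'h) \<Rightarrow> ('h \<Rightarrow> 'h) \<Rightarrow> bool" where
  "is_adjoint ip T S \<longleftrightarrow> (\<forall>x y. ip (T x) y = ip x (S y))"

definition linear_into_BH ::
  "(complex \<Rightarrow> 'h::ab_group_add \<Rightarrow> 'h) \<Rightarrow> ('h \<Rightarrow> 'h \<Rightarrow> complex) \<Rightarrow> nat \<Rightarrow>
   (complex mat \<Rightarrow> 'h \<Rightarrow> 'h) \<Rightarrow> bool" where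
  "linear_into_BH sc ip n \<phi> \<longleftrightarrow>
     (\<forall>A \<in> carrier_mat n n. bounded_op sc ip (\<phi> A)) \<and>
     (\<forall>A \<in> carrier_mat n n. \<forall>B \<in> carrier_mat n n. \<forall>x. \<phi> (A + B) x = \<phi> A x + \<phi> B x) \<and>
     (\<forall>A \<in> carrier_mat n n. \<forall>c x. \<phi> (c \<cdot>\<^sub>m A) x = sc c (\<phi> A x))"

definition mat_representation ::
  "(complex \<Rightarrow> 'h::ab_group_add \<Rightarrow> 'h) \<Rightarrow> ('h \<Rightarrow> 'h \<Rightarrow> complex) \<Rightarrow> nat \<Rightarrow>
   (complex mat \<Rightarrow> 'h \<Rightarrow> 'h) \<Rightarrow> bool" where
  "mat_representation sc ip n \<pi> \<longleftrightarrow>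
     linear_into_BH sc ip n \<pi> \<and>
     (\<forall>A \<in> carrier_mat n n. \<forall>B \<in> carrier_mat n n. \<pi> (A * B) = \<pi> A \<circ> \<pi> B) \<and>
     (\<forall>A \<in> carrier_mat n n. is_adjoint ip (\<pi> A) (\<pi> (mat_adjoint A))) \<and>
     \<pi> (1\<^sub>m n) = id"

definition psd_mat :: "complex mat \<Rightarrow> bool" where
  "psd_mat M \<longleftrightarrow> M \<in> carrier_mat (dim_row M) (dim_row M) \<and>
     (\<forall>v \<in> carrier_vec (dim_row M).
        Im ((M *\<^sub>v v) \<bullet>c v) = 0 \<and> Re ((M *\<^sub>v v) \<bullet>c v) \<ge> 0)"

text \<open>The k\<times>k block matrix with n\<times>n blocks B i j, as an element of M_{kn}(C) = M_k(M_n(C)).\<close>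

definition block_mat :: "nat \<Rightarrow> nat \<Rightarrow> (nat \<Rightarrow> nat \<Rightarrow> complex mat) \<Rightarrow> complex mat" where
  "block_mat k n B = mat (k * n) (k * n) (\<lambda>(i, j). B (i div n) (j div n) $$ (i mod n, j mod n))"

text \<open>Complete positivity of \<phi> : M_n(C) \<rightarrow> B(H): for every k, the amplification
  \<phi>_k : M_k(M_n(C)) \<rightarrow> M_k(B(H)) = B(H^k) maps positive elements to positive operators,
  i.e. <\<phi>_k(B)\<xi>,\<xi>> = \<Sum>_{i,j} <\<phi>(B_ij) \<xi>_j, \<xi>_i> \<ge> 0.\<close>

definition completely_positive ::
  "(complex \<Rightarrow> 'h::ab_group_add \<Rightarrow> 'h) \<Rightarrow> ('h \<Rightarrow> 'h \<Rightarrow> complex) \<Rightarrow> nat \<Rightarrow>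
   (complex mat \<Rightarrow> 'h \<Rightarrow> 'h) \<Rightarrow> bool" where
  "completely_positive sc ip n \<phi> \<longleftrightarrow>
     (\<forall>k. \<forall>B :: nat \<Rightarrow> nat \<Rightarrow> complex mat.
        (\<forall>i<k. \<forall>j<k. B i j \<in> carrier_mat n n) \<longrightarrow> psd_mat (block_mat k n B) \<longrightarrow>
        (\<forall>\<xi> :: nat \<Rightarrow> 'h.
           Im (\<Sum>i<k. \<Sum>j<k. ip (\<phi> (B i j) (\<xi> j)) (\<xi> i)) = 0 \<and>
           Re (\<Sum>i<k. \<Sum>j<k. ip (\<phi> (B i j) (\<xi> j)) (\<xi> i)) \<ge> 0))"

definition toeplitz_system :: "nat \<Rightarrow> complex mat set" where
  "toeplitz_system n = {A \<in> carrier_mat n n.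
     \<forall>i j k l. i < n \<longrightarrow> j < n \<longrightarrow> k < n \<longrightarrow> l < n \<longrightarrow>
       int i - int j = int k - int l \<longrightarrow> A $$ (i, j) = A $$ (k, l)}"

text \<open>Unique extension property of \<pi>|_R for a representation \<pi> of M_n(C) on H:
  every completely positive linear map \<psi> : M_n(C) \<rightarrow> B(H) agreeing with \<pi> on R equals \<pi>.
  Hyperrigidity of R in M_n(C) = this holds for every Hilbert space H and every \<pi>
  (universal quantification over the type 'h in the theorem).\<close>

definition unique_extension_property ::
  "(complex \<Rightarrow> 'h::ab_group_add \<Rightarrow> 'h) \<Rightarrow> ('h \<Rightarrow> 'h \<Rightarrow> complex) \<Rightarrow> nat \<Rightarrow>
   complex mat set \<Rightarrow> (complex mat \<Rightarrow> 'h \<Rightarrow> 'h) \<Rightarrow> bool" where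
  "unique_extension_property sc ip n R \<pi> \<longleftrightarrow>
     (\<forall>\<psi>. linear_into_BH sc ip n \<psi> \<longrightarrow> completely_positive sc ip n \<psi> \<longrightarrow>
        (\<forall>A \<in> R. \<psi> A = \<pi> A) \<longrightarrow> (\<forall>A \<in> carrier_mat n n. \<psi> A = \<pi> A))"

end

theory Submission
  imports Defs
begin


lemma adj_index:
  fixes A :: "complex mat"
  assumes "A \<in> carrier_mat n m"
  shows "mat_adjoint A = mat m n (\<lambda>(i,j). cnj (A $$ (j,i)))"
  using assms unfolding mat_adjoint_def
  by (intro eq_matI) (auto simp: mat_of_rows_index)

lemma adj_carrier: fixes A :: "complex mat" assumes "A \<in> carrier_mat n m" shows "mat_adjoint A \<in> carrier_mat m n"
  by (simp add: adj_index[OF assms])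

lemma adj_adj: fixes A :: "complex mat" assumes "A \<in> carrier_mat n m" shows "mat_adjoint (mat_adjoint A) = A"
proof -
  have c: "mat_adjoint A \<in> carrier_mat m n" by (rule adj_carrier[OF assms])
  show ?thesis using assms
    by (simp add: adj_index[OF c]) (intro eq_matI, auto simp: adj_index[OF assms])
qed

lemma psd_adj_mult:
  fixes C :: "complex mat"
  assumes C: "C \<in> carrier_mat m m"
  shows "psd_mat (mat_adjoint C * C)"
proof -
  have ca: "mat_adjoint C \<in> carrier_mat m m" by (rule adj_carrier[OF C])
  have dr: "dim_row (mat_adjoint C * C) = m" using ca by simp
  have car: "mat_adjoint C * C \<in> carrier_mat m m" using ca C by simp
  { fix v :: "complex vec" assume v: "v \<in> carrier_vec m"
    define w where "w = C *\<^sub>v v"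
    have w: "w \<in> carrier_vec m" using C v by (simp add: w_def)
    have "(mat_adjoint C * C) *\<^sub>v v = mat_adjoint C *\<^sub>v w"
      unfolding w_def using assoc_mult_mat_vec[OF ca C v] .
    hence "((mat_adjoint C * C) *\<^sub>v v) \<bullet>c v = (mat_adjoint C *\<^sub>v w) \<bullet>c v" by simp
    also have "\<dots> = (\<Sum>a<m. (\<Sum>b<m. cnj (C $$ (b,a)) * w $ b) * cnj (v $ a))"
      using v w ca C unfolding scalar_prod_def
      by (auto simp: adj_index[OF C] mult_mat_vec_def row_def atLeast0LessThan scalar_prod_def intro!: sum.cong)
    also have "\<dots> = (\<Sum>a<m. \<Sum>b<m. w $ b * (cnj (C $$ (b,a)) * cnj (v $ a)))"
      by (simp add: sum_distrib_right sum_distrib_left mult_ac)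
    also have "\<dots> = (\<Sum>b<m. \<Sum>a<m. w $ b * (cnj (C $$ (b,a)) * cnj (v $ a)))"
      by (rule sum.swap)
    also have "\<dots> = (\<Sum>b<m. w $ b * cnj (\<Sum>a<m. C $$ (b,a) * v $ a))"
      by (simp add: sum_distrib_left)
    also have "\<dots> = (\<Sum>b<m. w $ b * cnj (w $ b))"
      using v C unfolding w_def
      by (auto simp: mult_mat_vec_def row_def atLeast0LessThan scalar_prod_def cnj_sum intro!: sum.cong)
    also have "\<dots> = (\<Sum>b<m. complex_of_real ((Re (w $ b))\<^sup>2 + (Im (w $ b))\<^sup>2))"
      by (simp add: complex_mult_cnj)
    finally have eq: "((mat_adjoint C * C) *\<^sub>v v) \<bullet>c v = (\<Sum>b<m. complex_of_real ((Re (w $ b))\<^sup>2 + (Im (w $ b))\<^sup>2))" .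
    have "Im (((mat_adjoint C * C) *\<^sub>v v) \<bullet>c v) = 0 \<and> Re (((mat_adjoint C * C) *\<^sub>v v) \<bullet>c v) \<ge> 0"
      unfolding eq by (simp add: Im_sum Re_sum sum_nonneg)
  }
  thus ?thesis unfolding psd_mat_def using car dr by auto
qed


lemma sum_2n_cut:
  fixes f :: "nat \<Rightarrow> complex"
  assumes "\<And>c. c \<ge> n \<Longrightarrow> c < 2*n \<Longrightarrow> f c = 0"
  shows "(\<Sum>c<2*n. f c) = (\<Sum>c<n. f c)"
  by (rule sum.mono_neutral_right) (auto simp: assms)

lemma block_eq:
  fixes A :: "complex mat"
  assumes A: "A \<in> carrier_mat n n"
  defines "B \<equiv> (\<lambda>i j. if i = 0 then (if j = 0 then mat_adjoint A * A else mat_adjoint A)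
                        else (if j = 0 then A else 1\<^sub>m n))"
  defines "C \<equiv> mat (2*n) (2*n) (\<lambda>(a,b). if a < n then (if b < n then A $$ (a,b) else if b = a + n then 1 else 0) else 0)"
  shows "block_mat 2 n B = mat_adjoint C * C"
proof -
  have Cc: "C \<in> carrier_mat (2*n) (2*n)" unfolding C_def by simp
  have Ca: "mat_adjoint C \<in> carrier_mat (2*n) (2*n)" by (rule adj_carrier[OF Cc])
  show ?thesis
  proof (rule eq_matI)
    show "dim_row (block_mat 2 n B) = dim_row (mat_adjoint C * C)" using Ca by (simp add: block_mat_def)
    show "dim_col (block_mat 2 n B) = dim_col (mat_adjoint C * C)" using Cc by (simp add: block_mat_def)
    fix a b assume a: "a < dim_row (mat_adjoint C * C)" and b: "b < dim_col (mat_adjoint C * C)"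
    hence a: "a < 2*n" and b: "b < 2*n" using Ca Cc by auto
    have npos: "n > 0" using a by auto
    have rhs: "(mat_adjoint C * C) $$ (a,b) = (\<Sum>c<n. cnj (C $$ (c,a)) * C $$ (c,b))"
    proof -
      have "(mat_adjoint C * C) $$ (a,b) = (\<Sum>c<2*n. cnj (C $$ (c,a)) * C $$ (c,b))"
        using a b Ca Cc by (simp add: adj_index[OF Cc] scalar_prod_def atLeast0LessThan)
      also have "\<dots> = (\<Sum>c<n. cnj (C $$ (c,a)) * C $$ (c,b))"
        by (rule sum_2n_cut) (auto simp: C_def a b)
      finally show ?thesis .
    qed
    have lhs: "block_mat 2 n B $$ (a,b) = B (a div n) (b div n) $$ (a mod n, b mod n)"
      using a b by (simp add: block_mat_def)
    have Cin: "\<And>c. c < n \<Longrightarrow> C $$ (c, a) = (if a < n then A $$ (c,a) else if a = c + n then 1 else 0)"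
      "\<And>c. c < n \<Longrightarrow> C $$ (c, b) = (if b < n then A $$ (c,b) else if b = c + n then 1 else 0)"
      using a b by (auto simp: C_def)
    show "block_mat 2 n B $$ (a,b) = (mat_adjoint C * C) $$ (a,b)"
    proof (cases "a < n")
      case True note an = this
      show ?thesis
      proof (cases "b < n")
        case True
        then show ?thesis unfolding lhs rhs using an A
          by (simp add: B_def Cin adj_index[OF A] scalar_prod_def atLeast0LessThan)
      next
        case False
        hence bd: "b div n = 1" "b mod n = b - n" using b by (auto simp: div_if mod_if)
        have "(\<Sum>c<n. cnj (C $$ (c,a)) * C $$ (c,b)) = (\<Sum>c<n. if c = b - n then cnj (A $$ (c,a)) else 0)"
          using an False by (intro sum.cong) (auto simp: Cin)
        also have "\<dots> = cnj (A $$ (b - n, a))" using b by simp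
        finally show ?thesis unfolding lhs rhs using an A b False bd
          by (simp add: B_def adj_index[OF A] div_if)
      qed
    next
      case False note an = this
      hence ad: "a div n = 1" "a mod n = a - n" using a by (auto simp: div_if mod_if)
      show ?thesis
      proof (cases "b < n")
        case True
        have "(\<Sum>c<n. cnj (C $$ (c,a)) * C $$ (c,b)) = (\<Sum>c<n. if c = a - n then A $$ (c,b) else 0)"
          using an True by (intro sum.cong) (auto simp: Cin)
        also have "\<dots> = A $$ (a - n, b)" using a by simp
        finally show ?thesis unfolding lhs rhs using an A b True ad
          by (simp add: B_def div_if)
      next
        case False
        hence bd: "b div n = 1" "b mod n = b - n" using b by (auto simp: div_if mod_if)
        have "(\<Sum>c<n. cnj (C $$ (c,a)) * C $$ (c,b)) = (\<Sum>c<n. if c = a - n then (if a = b then 1 else 0) else 0)"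
          using an False by (intro sum.cong) (auto simp: Cin)
        also have "\<dots> = (if a = b then 1 else 0)" using a b an False by auto
        finally show ?thesis unfolding lhs rhs using an A a b False ad bd
          by (auto simp: B_def)
      qed
    qed
  qed
qed

lemma cp_2x2:
  fixes \<psi> :: "complex mat \<Rightarrow> 'h::ab_group_add \<Rightarrow> 'h" and A :: "complex mat"
  assumes cp: "completely_positive sc ip n \<psi>" and A: "A \<in> carrier_mat n n"
  shows "Im (ip (\<psi> (mat_adjoint A * A) x) x + ip (\<psi> (mat_adjoint A) y) x + ip (\<psi> A x) y + ip (\<psi> (1\<^sub>m n) y) y) = 0
       \<and> Re (ip (\<psi> (mat_adjoint A * A) x) x + ip (\<psi> (mat_adjoint A) y) x + ip (\<psi> A x) y + ip (\<psi> (1\<^sub>m n) y) y) \<ge> 0"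
proof -
  define B where "B \<equiv> (\<lambda>i j. if i = (0::nat) then (if j = (0::nat) then mat_adjoint A * A else mat_adjoint A)
                        else (if j = 0 then A else 1\<^sub>m n))"
  define C where "C \<equiv> mat (2*n) (2*n) (\<lambda>(a,b). if a < n then (if b < n then A $$ (a,b) else if b = a + n then (1::complex) else 0) else 0)"
  have Cc: "C \<in> carrier_mat (2*n) (2*n)" unfolding C_def by simp
  have psd: "psd_mat (block_mat 2 n B)"
    unfolding B_def block_eq[OF A] C_def[symmetric] by (rule psd_adj_mult[OF Cc])
  have Ba: "\<forall>i<2. \<forall>j<2. B i j \<in> carrier_mat n n"
    using A adj_carrier[OF A] by (auto simp: B_def)
  define \<xi> where "\<xi> \<equiv> (\<lambda>i::nat. if i = 0 then x else y)"
  have "Im (\<Sum>i<2. \<Sum>j<2. ip (\<psi> (B i j) (\<xi> j)) (\<xi> i)) = 0 \<and> Re (\<Sum>i<2. \<Sum>j<2. ip (\<psi> (B i j) (\<xi> j)) (\<xi> i)) \<ge> 0"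
    using cp Ba psd unfolding completely_positive_def by blast
  moreover have "(\<Sum>i<2. \<Sum>j<2. ip (\<psi> (B i j) (\<xi> j)) (\<xi> i)) =
      ip (\<psi> (mat_adjoint A * A) x) x + ip (\<psi> (mat_adjoint A) y) x + ip (\<psi> A x) y + ip (\<psi> (1\<^sub>m n) y) y"
    by (simp add: numeral_2_eq_2 B_def \<xi>_def)
  ultimately show ?thesis by simp
qed




context
  fixes sc :: "complex \<Rightarrow> 'h::ab_group_add \<Rightarrow> 'h" and ip :: "'h \<Rightarrow> 'h \<Rightarrow> complex"
  assumes H: "complex_hilbert_space sc ip"
begin

lemma ip_add1: "ip (x + y) z = ip x z + ip y z" by (rule H[unfolded complex_hilbert_space_def, THEN conjunct2, THEN conjunct2, THEN conjunct2, THEN conjunct2, THEN conjunct1, rule_format])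
lemma ip_sc1: "ip (sc a x) y = a * ip x y" by (rule H[unfolded complex_hilbert_space_def, THEN conjunct2, THEN conjunct2, THEN conjunct2, THEN conjunct2, THEN conjunct2, THEN conjunct1, rule_format])
lemma ip_cnj: "ip y x = cnj (ip x y)" by (rule H[unfolded complex_hilbert_space_def, THEN conjunct2, THEN conjunct2, THEN conjunct2, THEN conjunct2, THEN conjunct2, THEN conjunct2, THEN conjunct1, rule_format])
lemma ip_self: "Im (ip x x) = 0 \<and> Re (ip x x) \<ge> 0" by (rule H[unfolded complex_hilbert_space_def, THEN conjunct2, THEN conjunct2, THEN conjunct2, THEN conjunct2, THEN conjunct2, THEN conjunct2, THEN conjunct2, THEN conjunct1, rule_format])
lemma ip_self_zero: "ip x x = 0 \<Longrightarrow> x = 0" by (rule H[unfolded complex_hilbert_space_def, THEN conjunct2, THEN conjunct2, THEN conjunct2, THEN conjunct2, THEN conjunct2, THEN conjunct2, THEN conjunct2, THEN conjunct2, THEN conjunct1, rule_format])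
lemma sc_add1: "sc (a + b) x = sc a x + sc b x" by (rule H[unfolded complex_hilbert_space_def, THEN conjunct2, THEN conjunct1, rule_format])
lemma sc_one: "sc 1 x = x" by (rule H[unfolded complex_hilbert_space_def, THEN conjunct2, THEN conjunct2, THEN conjunct2, THEN conjunct1, rule_format])

lemma ip_add2: "ip x (y + z) = ip x y + ip x z"
proof -
  have "ip x (y + z) = cnj (ip (y + z) x)" by (rule ip_cnj)
  also have "\<dots> = cnj (ip y x) + cnj (ip z x)" by (simp add: ip_add1)
  also have "\<dots> = ip x y + ip x z" using ip_cnj[of y x] ip_cnj[of z x] by simp
  finally show ?thesis .
qed
lemma ip_sc2: "ip x (sc a y) = cnj a * ip x y"
proof -
  have "ip x (sc a y) = cnj (ip (sc a y) x)" by (rule ip_cnj)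
  also have "\<dots> = cnj a * cnj (ip y x)" by (simp add: ip_sc1)
  also have "\<dots> = cnj a * ip x y" using ip_cnj[of y x] by simp
  finally show ?thesis .
qed
lemma ip_zero1: "ip 0 y = 0"
  using ip_add1[of 0 0 y] by simp
lemma ip_zero2: "ip x 0 = 0"
  using ip_add2[of x 0 0] by simp
lemma ip_minus1: "ip (- x) y = - ip x y"
proof -
  have "ip x y + ip (- x) y = 0" using ip_add1[of x "-x" y] by (simp add: ip_zero1)
  thus ?thesis by (rule minus_unique[symmetric])
qed
lemma ip_minus2: "ip x (- y) = - ip x y"
proof -
  have "ip x y + ip x (- y) = 0" using ip_add2[of x y "-y"] by (simp add: ip_zero2)
  thus ?thesis by (rule minus_unique[symmetric])
qed
lemma ip_diff1: "ip (x - y) z = ip x z - ip y z"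
  by (simp only: diff_conv_add_uminus ip_add1 ip_minus1)
lemma ip_diff2: "ip z (x - y) = ip z x - ip z y"
  by (simp only: diff_conv_add_uminus ip_add2 ip_minus2)
lemma sc_zero: "sc 0 x = 0"
  using sc_add1[of 0 0 x] by simp
lemma ip_sum1: "finite S \<Longrightarrow> ip (\<Sum>i\<in>S. f i) y = (\<Sum>i\<in>S. ip (f i) y)"
  by (induction S rule: finite_induct) (auto simp: ip_zero1 ip_add1)
lemma ip_ext: "(\<And>y. ip u y = ip v y) \<Longrightarrow> u = v"
proof -
  assume a: "\<And>y. ip u y = ip v y"
  have "ip (u - v) (u - v) = 0" by (simp add: ip_diff1 a)
  hence "u - v = 0" by (rule ip_self_zero)
  thus "u = v" by simp
qed

end

lemma bop_add: "bounded_op sc ip T \<Longrightarrow> T (x + y) = T x + T y"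
  by (simp add: bounded_op_def)
lemma bop_zero: "bounded_op sc ip T \<Longrightarrow> T 0 = 0"
proof -
  assume b: "bounded_op sc ip T"
  have "T 0 = T 0 + T 0" using bop_add[OF b, of 0 0] by simp
  thus ?thesis by simp
qed
lemma bop_sc: "bounded_op sc ip T \<Longrightarrow> T (sc a x) = sc a (T x)"
  by (simp add: bounded_op_def)
lemma bop_minus: "bounded_op sc ip T \<Longrightarrow> T (- x) = - T x"
proof -
  assume b: "bounded_op sc ip T"
  have "T x + T (- x) = 0" using bop_add[OF b, of x "-x"] bop_zero[OF b] by simp
  thus ?thesis by (rule minus_unique[symmetric])
qed
lemma bop_diff: "bounded_op sc ip T \<Longrightarrow> T (x - y) = T x - T y"
  by (metis diff_conv_add_uminus bop_add bop_minus)
lemma bop_sum: assumes b: "bounded_op sc ip T" and S: "finite S" shows "T (\<Sum>i\<in>S. f i) = (\<Sum>i\<in>S. T (f i))"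
  using S by (induction S rule: finite_induct) (auto simp: bop_zero[OF b] bop_add[OF b])

definition Eu :: "nat \<Rightarrow> nat \<Rightarrow> nat \<Rightarrow> complex mat" where
  "Eu n i j = mat n n (\<lambda>(a,b). if a = i \<and> b = j then 1 else 0)"

lemma Eu_carrier[simp]: "Eu n i j \<in> carrier_mat n n" by (simp add: Eu_def)

context
  fixes sc :: "complex \<Rightarrow> 'h::ab_group_add \<Rightarrow> 'h" and ip :: "'h \<Rightarrow> 'h \<Rightarrow> complex"
    and n :: nat and \<phi> :: "complex mat \<Rightarrow> 'h \<Rightarrow> 'h"
  assumes H: "complex_hilbert_space sc ip" and L: "linear_into_BH sc ip n \<phi>"
begin

lemma lin_add: "A \<in> carrier_mat n n \<Longrightarrow> B \<in> carrier_mat n n \<Longrightarrow> \<phi> (A + B) x = \<phi> A x + \<phi> B x"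
  using L by (simp add: linear_into_BH_def)
lemma lin_smult: "A \<in> carrier_mat n n \<Longrightarrow> \<phi> (c \<cdot>\<^sub>m A) x = sc c (\<phi> A x)"
  using L by (simp add: linear_into_BH_def)
lemma lin_bop: "A \<in> carrier_mat n n \<Longrightarrow> bounded_op sc ip (\<phi> A)"
  using L by (simp add: linear_into_BH_def)
lemma lin_zero: "\<phi> (0\<^sub>m n n) x = 0"
  using lin_add[of "0\<^sub>m n n" "0\<^sub>m n n" x] by simp

lemma decomp_gen:
  assumes A: "A \<in> carrier_mat n n" and S: "finite S" "S \<subseteq> {..<n} \<times> {..<n}"
  shows "\<phi> (mat n n (\<lambda>p. if p \<in> S then A $$ p else 0)) x = (\<Sum>p\<in>S. sc (A $$ p) (\<phi> (Eu n (fst p) (snd p)) x))"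
  using S
proof (induction S rule: finite_induct)
  case empty
  have "mat n n (\<lambda>p. if p \<in> {} then A $$ p else 0) = 0\<^sub>m n n" by (intro eq_matI) auto
  then show ?case by (simp add: lin_zero)
next
  case (insert p S)
  obtain a b where p: "p = (a,b)" by force
  have ab: "a < n" "b < n" using insert p by auto
  have "mat n n (\<lambda>q. if q \<in> insert p S then A $$ q else 0) =
      mat n n (\<lambda>q. if q \<in> S then A $$ q else 0) + A $$ p \<cdot>\<^sub>m Eu n a b"
    using insert(2) p ab by (intro eq_matI) (auto simp: Eu_def)
  hence "\<phi> (mat n n (\<lambda>q. if q \<in> insert p S then A $$ q else 0)) x =
      \<phi> (mat n n (\<lambda>q. if q \<in> S then A $$ q else 0)) x + sc (A $$ p) (\<phi> (Eu n a b) x)"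
    by (simp add: lin_add lin_smult)
  then show ?case using insert p by (simp add: add.commute)
qed

lemma decomp:
  assumes A: "A \<in> carrier_mat n n"
  shows "\<phi> A x = (\<Sum>p\<in>{..<n} \<times> {..<n}. sc (A $$ p) (\<phi> (Eu n (fst p) (snd p)) x))"
proof -
  have "mat n n (\<lambda>p. if p \<in> {..<n} \<times> {..<n} then A $$ p else 0) = A"
    using A by (intro eq_matI) auto
  thus ?thesis using decomp_gen[OF A, of "{..<n} \<times> {..<n}" x] by simp
qed

end




definition Tm :: "nat \<Rightarrow> (int \<Rightarrow> complex) \<Rightarrow> complex mat" where
  "Tm n f = mat n n (\<lambda>(a,b). f (int a - int b))"

lemma Tm_carrier[simp]: "Tm n f \<in> carrier_mat n n" by (simp add: Tm_def)

lemma Tm_toep: "Tm n f \<in> toeplitz_system n"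
  unfolding toeplitz_system_def Tm_def by auto

lemma Tm_adj: "mat_adjoint (Tm n f) = Tm n (\<lambda>d. cnj (f (- d)))"
  by (subst adj_index[OF Tm_carrier]) (intro eq_matI, auto simp: Tm_def)

lemma one_Tm: "1\<^sub>m n = Tm n (\<lambda>d. if d = 0 then 1 else 0)"
  by (intro eq_matI) (auto simp: Tm_def)

lemma Eu_adj: "mat_adjoint (Eu n i j) = Eu n j i"
  by (subst adj_index[OF Eu_carrier]) (intro eq_matI, auto simp: Eu_def)

lemma Eu_mult:
  assumes "i < n" "j < n" "k < n" "l < n"
  shows "Eu n i j * Eu n k l = (if j = k then Eu n i l else 0\<^sub>m n n)"
proof (intro eq_matI)
  fix a b assume ab: "a < dim_row (if j = k then Eu n i l else 0\<^sub>m n n)" "b < dim_col (if j = k then Eu n i l else 0\<^sub>m n n)"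
  hence a: "a < n" and b: "b < n" by (auto simp: Eu_def split: if_splits)
  have "(Eu n i j * Eu n k l) $$ (a,b) = (\<Sum>c<n. (if a = i \<and> c = j then 1 else 0) * (if c = k \<and> b = l then 1 else 0))"
    using a b by (simp add: Eu_def scalar_prod_def atLeast0LessThan)
  also have "\<dots> = (\<Sum>c<n. if c = j then (if a = i \<and> j = k \<and> b = l then 1 else 0) else 0)"
    by (intro sum.cong) auto
  also have "\<dots> = (if a = i \<and> j = k \<and> b = l then 1 else 0)" using assms by simp
  finally show "(Eu n i j * Eu n k l) $$ (a,b) = (if j = k then Eu n i l else 0\<^sub>m n n) $$ (a,b)"
    using a b by (auto simp: Eu_def)
qed (auto simp: Eu_def)

lemma smult_Eu_adj: "mat_adjoint (c \<cdot>\<^sub>m Eu n i j) = cnj c \<cdot>\<^sub>m Eu n j i"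
proof -
  have "c \<cdot>\<^sub>m Eu n i j \<in> carrier_mat n n" by simp
  from adj_index[OF this] show ?thesis by (intro eq_matI) (auto simp: Eu_def)
qed

lemma smult_Eu_sq:
  assumes "i < n" "j < n"
  shows "mat_adjoint (c \<cdot>\<^sub>m Eu n i j) * (c \<cdot>\<^sub>m Eu n i j) = (cnj c * c) \<cdot>\<^sub>m Eu n j j"
proof -
  have "mat_adjoint (c \<cdot>\<^sub>m Eu n i j) * (c \<cdot>\<^sub>m Eu n i j) = (cnj c \<cdot>\<^sub>m Eu n j i) * (c \<cdot>\<^sub>m Eu n i j)"
    by (simp add: smult_Eu_adj)
  also have "\<dots> = cnj c \<cdot>\<^sub>m (Eu n j i * (c \<cdot>\<^sub>m Eu n i j))"
    by (rule mult_smult_assoc_mat[of "Eu n j i" n n "c \<cdot>\<^sub>m Eu n i j" n]) auto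
  also have "Eu n j i * (c \<cdot>\<^sub>m Eu n i j) = c \<cdot>\<^sub>m (Eu n j i * Eu n i j)"
    by (rule mult_smult_distrib[of "Eu n j i" n n "Eu n i j" n]) auto
  also have "Eu n j i * Eu n i j = Eu n j j" using Eu_mult[OF assms(2,1,1,2)] by simp
  also have "cnj c \<cdot>\<^sub>m (c \<cdot>\<^sub>m Eu n j j) = (cnj c * c) \<cdot>\<^sub>m Eu n j j"
    by (intro eq_matI) auto
  finally show ?thesis .
qed

definition Sh :: "nat \<Rightarrow> nat \<Rightarrow> complex mat" where
  "Sh n k = Tm n (\<lambda>d. if d = int k then 1 else 0)"

definition Dg :: "nat \<Rightarrow> (nat \<Rightarrow> complex) \<Rightarrow> complex mat" where
  "Dg n d = mat n n (\<lambda>(a,b). if a = b then d a else 0)"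

lemma Sh_carrier[simp]: "Sh n k \<in> carrier_mat n n" by (simp add: Sh_def)

lemma Sh_dims[simp]: "dim_row (Sh n k) = n" "dim_col (Sh n k) = n" by (simp_all add: Sh_def Tm_def)

lemma Sh_index: "a < n \<Longrightarrow> b < n \<Longrightarrow> Sh n k $$ (a,b) = (if int a - int b = int k then 1 else 0)"
  by (simp add: Sh_def Tm_def)

lemma adj_entry: "(A::complex mat) \<in> carrier_mat n m \<Longrightarrow> i < m \<Longrightarrow> j < n \<Longrightarrow> mat_adjoint A $$ (i,j) = cnj (A $$ (j,i))"
  by (simp add: adj_index)

lemma adj_dims: "(A::complex mat) \<in> carrier_mat n m \<Longrightarrow> dim_row (mat_adjoint A) = m \<and> dim_col (mat_adjoint A) = n"
  by (simp add: adj_index)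

lemma Sh_sq1: "mat_adjoint (Sh n k) * Sh n k = Dg n (\<lambda>m. if m + k < n then 1 else 0)"
proof (intro eq_matI)
  fix a b assume "a < dim_row (Dg n (\<lambda>m. if m + k < n then 1 else 0))" "b < dim_col (Dg n (\<lambda>m. if m + k < n then 1 else 0))"
  hence a: "a < n" and b: "b < n" by (auto simp: Dg_def)
  have "(mat_adjoint (Sh n k) * Sh n k) $$ (a,b) =
     (\<Sum>c<n. cnj (if int c - int a = int k then 1 else 0) * (if int c - int b = int k then 1 else 0))"
    using a b by (simp add: adj_entry[OF Sh_carrier] adj_dims[OF Sh_carrier] Sh_index scalar_prod_def atLeast0LessThan)
  also have "\<dots> = (\<Sum>c<n. if c = a + k then (if a = b then 1 else 0) else 0)"
    by (intro sum.cong) auto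
  also have "\<dots> = (if a + k < n then (if a = b then 1 else 0) else 0)" by simp
  finally show "(mat_adjoint (Sh n k) * Sh n k) $$ (a,b) = Dg n (\<lambda>m. if m + k < n then 1 else 0) $$ (a,b)"
    using a b by (auto simp: Dg_def)
qed (auto simp: Dg_def adj_dims[OF Sh_carrier])

lemma Sh_sq2: "mat_adjoint (mat_adjoint (Sh n k)) * mat_adjoint (Sh n k) = Dg n (\<lambda>m. if k \<le> m then 1 else 0)"
proof (intro eq_matI)
  fix a b assume "a < dim_row (Dg n (\<lambda>m. if k \<le> m then 1 else 0))" "b < dim_col (Dg n (\<lambda>m. if k \<le> m then 1 else 0))"
  hence a: "a < n" and b: "b < n" by (auto simp: Dg_def)
  have "(mat_adjoint (mat_adjoint (Sh n k)) * mat_adjoint (Sh n k)) $$ (a,b) =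
     (\<Sum>c<n. (if int a - int c = int k then 1 else 0) * cnj (if int b - int c = int k then 1 else 0))"
    using a b by (simp add: adj_adj[OF Sh_carrier] adj_entry[OF Sh_carrier] adj_dims[OF Sh_carrier] Sh_index scalar_prod_def atLeast0LessThan)
  also have "\<dots> = (\<Sum>c<n. if c = a - k then (if a = b \<and> k \<le> a then 1 else 0) else 0)"
    by (intro sum.cong) auto
  also have "\<dots> = (if k \<le> a then (if a = b then 1 else 0) else 0)" using a by auto
  finally show "(mat_adjoint (mat_adjoint (Sh n k)) * mat_adjoint (Sh n k)) $$ (a,b) = Dg n (\<lambda>m. if k \<le> m then 1 else 0) $$ (a,b)"
    using a b by (auto simp: Dg_def)
qed (auto simp: Dg_def adj_dims[OF Sh_carrier] adj_adj[OF Sh_carrier])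

lemma one_Dg: "1\<^sub>m n = Dg n (\<lambda>_. 1)"
  by (intro eq_matI) (auto simp: Dg_def)

lemma real_lemma:
  fixes p q :: "nat \<Rightarrow> real"
  assumes I1: "\<And>k. (\<Sum>m<n. if m + k < n then p m else 0) \<le> (\<Sum>m<n. if m + k < n then q m else 0)"
      and I2: "\<And>k. (\<Sum>m<n. if k \<le> m then p m else 0) \<le> (\<Sum>m<n. if k \<le> m then q m else 0)"
      and I3: "(\<Sum>m<n. p m) = (\<Sum>m<n. q m)"
  shows "\<And>j. j < n \<Longrightarrow> p j = q j"
proof -
  have cut: "(\<Sum>m<n. if m < j then f m else 0) = (\<Sum>m<j. f m)" if "j \<le> n" for j and f :: "nat \<Rightarrow> real"
  proof -
    have "(\<Sum>m<n. if m < j then f m else 0) = (\<Sum>m\<in>{m\<in>{..<n}. m < j}. f m)"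
      by (rule sum.inter_filter[symmetric, OF finite_lessThan])
    also have "{m\<in>{..<n}. m < j} = {..<j}" using that by auto
    finally show ?thesis .
  qed
  have split: "(\<Sum>m<n. if j \<le> m then f m else 0) = (\<Sum>m<n. f m) - (\<Sum>m<n. if m < j then f m else 0)" for j and f :: "nat \<Rightarrow> real"
  proof -
    have "(\<Sum>m<n. f m) = (\<Sum>m<n. (if j \<le> m then f m else 0) + (if m < j then f m else 0))"
      by (intro sum.cong) auto
    thus ?thesis by (simp add: sum.distrib)
  qed
  have F: "(\<Sum>m<j. p m) = (\<Sum>m<j. q m)" if j: "j \<le> n" for j
  proof -
    have e1: "(\<Sum>m<n. if m + (n - j) < n then f m else 0) = (\<Sum>m<n. if m < j then f m else 0)" for f :: "nat \<Rightarrow> real"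
      using j by (intro sum.cong) auto
    have "(\<Sum>m<j. p m) \<le> (\<Sum>m<j. q m)" using I1[of "n - j"] unfolding e1 cut[OF j] .
    moreover have "(\<Sum>m<j. q m) \<le> (\<Sum>m<j. p m)" using I2[of j] I3 unfolding split cut[OF j] by linarith
    ultimately show ?thesis by linarith
  qed
  fix j assume "j < n"
  hence "(\<Sum>m<Suc j. p m) = (\<Sum>m<Suc j. q m)" "(\<Sum>m<j. p m) = (\<Sum>m<j. q m)" using F[of "Suc j"] F[of j] by auto
  thus "p j = q j" by simp
qed

lemma complex_lemma:
  fixes \<alpha> \<beta> :: complex and r :: real
  assumes re: "\<And>c. Re (cnj c * \<alpha> + c * \<beta>) + r \<ge> 0"
      and im: "\<And>c. Im (cnj c * \<alpha> + c * \<beta>) = 0"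
  shows "\<alpha> = 0 \<and> \<beta> = 0"
proof -
  have lin: "a = 0" if h: "\<And>t::real. t * a + r \<ge> 0" for a :: real
  proof (rule ccontr)
    assume "a \<noteq> 0"
    have "(- (\<bar>r\<bar> + 1) / a) * a + r \<ge> 0" by (rule h)
    also have "(- (\<bar>r\<bar> + 1) / a) * a = - (\<bar>r\<bar> + 1)" using \<open>a \<noteq> 0\<close> by simp
    finally show False by linarith
  qed
  have a1: "Re \<alpha> + Re \<beta> = 0"
  proof (rule lin)
    fix t :: real show "t * (Re \<alpha> + Re \<beta>) + r \<ge> 0" using re[of "complex_of_real t"] by (simp add: algebra_simps)
  qed
  have a2: "Im \<alpha> - Im \<beta> = 0"
  proof (rule lin)
    fix t :: real show "t * (Im \<alpha> - Im \<beta>) + r \<ge> 0" using re[of "\<i> * complex_of_real t"] by (simp add: algebra_simps)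
  qed
  have a3: "Im \<alpha> + Im \<beta> = 0" using im[of 1] by simp
  have a4: "Re \<beta> - Re \<alpha> = 0" using im[of "\<i>"] by (simp add: algebra_simps)
  show ?thesis using a1 a2 a3 a4 by (simp add: complex_eq_iff)
qed




lemma sc_zero2:
  assumes H: "complex_hilbert_space sc ip" shows "sc a 0 = 0"
proof -
  have "sc a (0 + 0) = sc a 0 + sc a 0"
    by (rule H[unfolded complex_hilbert_space_def, THEN conjunct1, rule_format])
  thus ?thesis by simp
qed

lemma diag_form:
  assumes H: "complex_hilbert_space sc ip" and L: "linear_into_BH sc ip n \<phi>"
  shows "ip (\<phi> (Dg n d) x) x = (\<Sum>m<n. d m * ip (\<phi> (Eu n m m) x) x)"
proof -
  have Dc: "Dg n d \<in> carrier_mat n n" by (simp add: Dg_def)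
  have "ip (\<phi> (Dg n d) x) x = (\<Sum>p\<in>{..<n} \<times> {..<n}. Dg n d $$ p * ip (\<phi> (Eu n (fst p) (snd p)) x) x)"
    by (simp add: decomp[OF H L Dc] ip_sum1[OF H] ip_sc1[OF H])
  also have "\<dots> = (\<Sum>(a,b)\<in>{..<n} \<times> {..<n}. Dg n d $$ (a,b) * ip (\<phi> (Eu n a b) x) x)"
    by (intro sum.cong) auto
  also have "\<dots> = (\<Sum>a<n. \<Sum>b<n. Dg n d $$ (a,b) * ip (\<phi> (Eu n a b) x) x)"
    by (rule sum.cartesian_product[symmetric])
  also have "\<dots> = (\<Sum>a<n. d a * ip (\<phi> (Eu n a a) x) x)"
  proof (intro sum.cong refl)
    fix a assume a: "a \<in> {..<n}"
    have "(\<Sum>b<n. Dg n d $$ (a,b) * ip (\<phi> (Eu n a b) x) x) = (\<Sum>b<n. if b = a then d a * ip (\<phi> (Eu n a a) x) x else 0)"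
      using a by (intro sum.cong) (auto simp: Dg_def)
    also have "\<dots> = d a * ip (\<phi> (Eu n a a) x) x" using a by simp
    finally show "(\<Sum>b<n. Dg n d $$ (a,b) * ip (\<phi> (Eu n a b) x) x) = d a * ip (\<phi> (Eu n a a) x) x" .
  qed
  finally show ?thesis .
qed

lemma Re_ind_sum: "Re (\<Sum>m<n. (if P m then 1 else 0) * z m) = (\<Sum>m<n. if P m then Re (z m) else 0)"
  unfolding Re_sum by (intro sum.cong) auto

context
  fixes sc :: "complex \<Rightarrow> 'h::ab_group_add \<Rightarrow> 'h" and ip :: "'h \<Rightarrow> 'h \<Rightarrow> complex"
    and n :: nat and \<pi> \<psi> :: "complex mat \<Rightarrow> 'h \<Rightarrow> 'h"
  assumes H: "complex_hilbert_space sc ip" and R: "mat_representation sc ip n \<pi>"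
    and L\<psi>: "linear_into_BH sc ip n \<psi>" and CP: "completely_positive sc ip n \<psi>"
    and agree: "\<And>A. A \<in> toeplitz_system n \<Longrightarrow> \<psi> A = \<pi> A"
begin

lemma L\<pi>: "linear_into_BH sc ip n \<pi>"
  using R unfolding mat_representation_def by (rule conjunct1)

lemma \<pi>_mult: "A \<in> carrier_mat n n \<Longrightarrow> B \<in> carrier_mat n n \<Longrightarrow> \<pi> (A * B) x = \<pi> A (\<pi> B x)"
  using R[unfolded mat_representation_def, THEN conjunct2, THEN conjunct1, rule_format] by simp

lemma \<pi>_adj: "A \<in> carrier_mat n n \<Longrightarrow> ip (\<pi> A x) y = ip x (\<pi> (mat_adjoint A) y)"
  using R[unfolded mat_representation_def, THEN conjunct2, THEN conjunct2, THEN conjunct1, rule_format]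
  unfolding is_adjoint_def by blast

lemma \<pi>_one: "\<pi> (1\<^sub>m n) x = x"
  using R[unfolded mat_representation_def, THEN conjunct2, THEN conjunct2, THEN conjunct2] by simp

lemma \<psi>_one: "\<psi> (1\<^sub>m n) x = x"
proof -
  have "1\<^sub>m n \<in> toeplitz_system n" unfolding one_Tm by (rule Tm_toep)
  thus ?thesis using agree \<pi>_one by simp
qed

lemma P_P: "a < n \<Longrightarrow> b < n \<Longrightarrow> \<pi> (Eu n a a) (\<pi> (Eu n b b) x) = (if a = b then \<pi> (Eu n b b) x else 0)"
  using \<pi>_mult[of "Eu n a a" "Eu n b b" x] Eu_mult[of a n a b b] lin_zero[OF H L\<pi>] by auto

lemma P_sa: "j < n \<Longrightarrow> ip (\<pi> (Eu n j j) u) v = ip u (\<pi> (Eu n j j) v)"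
  using \<pi>_adj[of "Eu n j j" u v] by (simp add: Eu_adj)

lemma P_bop: "bounded_op sc ip (\<pi> (Eu n j j))"
  by (rule lin_bop[OF H L\<pi>]) simp

lemma \<pi>_comp: "a < n \<Longrightarrow> b < n \<Longrightarrow> \<pi> (Eu n a b) x = \<pi> (Eu n a a) (\<pi> (Eu n a b) (\<pi> (Eu n b b) x))"
proof -
  assume a: "a < n" and b: "b < n"
  have "Eu n a a * (Eu n a b * Eu n b b) = Eu n a b"
    using Eu_mult[OF a b b b] Eu_mult[OF a a a b] by simp
  hence "\<pi> (Eu n a b) x = \<pi> (Eu n a a * (Eu n a b * Eu n b b)) x" by simp
  also have "\<dots> = \<pi> (Eu n a a) (\<pi> (Eu n a b) (\<pi> (Eu n b b) x))"
    using \<pi>_mult[of "Eu n a a" "Eu n a b * Eu n b b" x] \<pi>_mult[of "Eu n a b" "Eu n b b"] mult_carrier_mat[OF Eu_carrier Eu_carrier] by simp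
  finally show ?thesis .
qed

lemma schwarz:
  assumes A: "A \<in> carrier_mat n n" and e1: "\<psi> A = \<pi> A" and e2: "\<psi> (mat_adjoint A) = \<pi> (mat_adjoint A)"
  shows "Re (ip (\<pi> (mat_adjoint A * A) x) x) \<le> Re (ip (\<psi> (mat_adjoint A * A) x) x)"
proof -
  have Aa: "mat_adjoint A \<in> carrier_mat n n" by (rule adj_carrier[OF A])
  define u where "u = \<pi> A x"
  define y where "y = - u"
  have s: "Re (ip (\<psi> (mat_adjoint A * A) x) x + ip (\<psi> (mat_adjoint A) y) x + ip (\<psi> A x) y + ip (\<psi> (1\<^sub>m n) y) y) \<ge> 0"
    using cp_2x2[OF CP A] by blast
  have t2: "ip (\<psi> (mat_adjoint A) y) x = - ip u u"
    using \<pi>_adj[OF Aa, of y x] by (simp add: e2 adj_adj[OF A] u_def[symmetric] y_def ip_minus1[OF H])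
  have t3: "ip (\<psi> A x) y = - ip u u"
    by (simp add: e1 u_def[symmetric] y_def ip_minus2[OF H])
  have t4: "ip (\<psi> (1\<^sub>m n) y) y = ip u u"
    by (simp add: \<psi>_one y_def ip_minus1[OF H] ip_minus2[OF H])
  have t1: "ip (\<pi> (mat_adjoint A * A) x) x = ip u u"
    using \<pi>_adj[OF Aa, of u x] by (simp add: \<pi>_mult[OF Aa A] u_def[symmetric] adj_adj[OF A])
  show ?thesis using s unfolding t2 t3 t4 t1 by simp
qed

lemma Sh_sq2': "Sh n k * mat_adjoint (Sh n k) = Dg n (\<lambda>m. if k \<le> m then 1 else 0)"
  using Sh_sq2[of n k] by (simp add: adj_adj[OF Sh_carrier])

lemma step1:
  assumes j: "j < n"
  shows "Re (ip (\<psi> (Eu n j j) x) x) = Re (ip (\<pi> (Eu n j j) x) x)"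
proof -
  define p where "p m = Re (ip (\<pi> (Eu n m m) x) x)" for m
  define q where "q m = Re (ip (\<psi> (Eu n m m) x) x)" for m
  have ShT: "\<psi> (Sh n k) = \<pi> (Sh n k)" for k
    by (rule agree) (simp add: Sh_def Tm_toep)
  have ShaT: "\<psi> (mat_adjoint (Sh n k)) = \<pi> (mat_adjoint (Sh n k))" for k
    by (rule agree) (simp add: Sh_def Tm_adj Tm_toep)
  have I1: "(\<Sum>m<n. if m + k < n then p m else 0) \<le> (\<Sum>m<n. if m + k < n then q m else 0)" for k
    using schwarz[OF Sh_carrier[of n k] ShT[of k] ShaT[of k], of x]
    unfolding Sh_sq1 diag_form[OF H L\<pi>] diag_form[OF H L\<psi>] Re_ind_sum p_def q_def .
  have I2: "(\<Sum>m<n. if k \<le> m then p m else 0) \<le> (\<Sum>m<n. if k \<le> m then q m else 0)" for k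
  proof -
    have aa: "mat_adjoint (mat_adjoint (Sh n k)) = Sh n k" by (rule adj_adj[OF Sh_carrier])
    have e2: "\<psi> (mat_adjoint (mat_adjoint (Sh n k))) = \<pi> (mat_adjoint (mat_adjoint (Sh n k)))"
      unfolding aa by (rule ShT)
    show ?thesis using schwarz[OF adj_carrier[OF Sh_carrier[of n k]] ShaT[of k] e2, of x]
      unfolding aa Sh_sq2' diag_form[OF H L\<pi>] diag_form[OF H L\<psi>] Re_ind_sum p_def q_def .
  qed
  have I3: "(\<Sum>m<n. p m) = (\<Sum>m<n. q m)"
  proof -
    have "ip (\<pi> (Dg n (\<lambda>_. 1)) x) x = ip (\<psi> (Dg n (\<lambda>_. 1)) x) x"
      unfolding one_Dg[symmetric] \<pi>_one \<psi>_one ..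
    hence "(\<Sum>m<n. 1 * ip (\<pi> (Eu n m m) x) x) = (\<Sum>m<n. 1 * ip (\<psi> (Eu n m m) x) x)"
      unfolding diag_form[OF H L\<pi>] diag_form[OF H L\<psi>] .
    hence "Re (\<Sum>m<n. 1 * ip (\<pi> (Eu n m m) x) x) = Re (\<Sum>m<n. 1 * ip (\<psi> (Eu n m m) x) x)"
      by (rule arg_cong)
    thus ?thesis unfolding p_def q_def Re_sum mult_1 .
  qed
  have "p j = q j" by (rule real_lemma[OF I1 I2 I3 j])
  thus ?thesis by (simp add: p_def q_def)
qed

lemma step1_im:
  assumes j: "j < n"
  shows "Im (ip (\<psi> (Eu n j j) x) x) = 0"
proof -
  have e: "mat_adjoint (Eu n j j) * Eu n j j = Eu n j j" using Eu_mult[OF j j j j] by (simp add: Eu_adj)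
  have z1: "\<psi> (mat_adjoint (Eu n j j)) 0 = 0" by (rule bop_zero, rule lin_bop[OF H L\<psi>]) (simp add: Eu_adj)
  have z2: "\<psi> (1\<^sub>m n) 0 = 0" by (simp add: \<psi>_one)
  show ?thesis using cp_2x2[OF CP Eu_carrier, of j j x 0] unfolding e z1 z2
    by (simp add: ip_zero1[OF H] ip_zero2[OF H])
qed

lemma step2:
  assumes i: "i < n" and j: "j < n" and Px: "\<pi> (Eu n j j) x = 0"
  shows "\<psi> (Eu n i j) x = 0 \<and> (\<forall>y. ip (\<psi> (Eu n j i) y) x = 0)"
proof -
  have z0: "ip (\<psi> (Eu n j j) x) x = 0"
    using step1[OF j, of x] step1_im[OF j, of x] Px by (simp add: complex_eq_iff ip_zero1[OF H])
  have both: "ip (\<psi> (Eu n j i) y) x = 0 \<and> ip (\<psi> (Eu n i j) x) y = 0" for y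
  proof -
    define \<alpha> where "\<alpha> = ip (\<psi> (Eu n j i) y) x"
    define \<beta> where "\<beta> = ip (\<psi> (Eu n i j) x) y"
    have key: "Im (cnj c * \<alpha> + c * \<beta>) = 0 \<and> Re (cnj c * \<alpha> + c * \<beta>) + Re (ip y y) \<ge> 0" for c
    proof -
      have cA: "c \<cdot>\<^sub>m Eu n i j \<in> carrier_mat n n" by simp
      have e1: "ip (\<psi> (mat_adjoint (c \<cdot>\<^sub>m Eu n i j) * (c \<cdot>\<^sub>m Eu n i j)) x) x = 0"
        unfolding smult_Eu_sq[OF i j] lin_smult[OF H L\<psi> Eu_carrier] ip_sc1[OF H] z0 by simp
      have e2: "ip (\<psi> (mat_adjoint (c \<cdot>\<^sub>m Eu n i j)) y) x = cnj c * \<alpha>"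
        unfolding smult_Eu_adj lin_smult[OF H L\<psi> Eu_carrier] ip_sc1[OF H] \<alpha>_def ..
      have e3: "ip (\<psi> (c \<cdot>\<^sub>m Eu n i j) x) y = c * \<beta>"
        unfolding lin_smult[OF H L\<psi> Eu_carrier] ip_sc1[OF H] \<beta>_def ..
      show ?thesis using cp_2x2[OF CP cA, of x y] ip_self[OF H, of y]
        unfolding e1 e2 e3 \<psi>_one by simp
    qed
    have "\<alpha> = 0 \<and> \<beta> = 0"
      by (rule complex_lemma[of \<alpha> \<beta> "Re (ip y y)"]) (use key in auto)
    thus ?thesis by (simp add: \<alpha>_def \<beta>_def)
  qed
  have "ip (\<psi> (Eu n i j) x) (\<psi> (Eu n i j) x) = 0" using both by blast
  hence "\<psi> (Eu n i j) x = 0" by (rule ip_self_zero[OF H])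
  thus ?thesis using both by blast
qed

lemma R1:
  assumes i: "i < n" and j: "j < n"
  shows "\<psi> (Eu n i j) x = \<psi> (Eu n i j) (\<pi> (Eu n j j) x)"
proof -
  define u where "u = x - \<pi> (Eu n j j) x"
  have Pu: "\<pi> (Eu n j j) u = 0"
    unfolding u_def bop_diff[OF P_bop] P_P[OF j j] by simp
  have "\<psi> (Eu n i j) u = 0" using step2[OF i j Pu] by blast
  moreover have "x = \<pi> (Eu n j j) x + u" unfolding u_def by simp
  ultimately show ?thesis
    using bop_add[OF lin_bop[OF H L\<psi> Eu_carrier[of n i j]], of "\<pi> (Eu n j j) x" u] by simp
qed

lemma R2:
  assumes i: "i < n" and j: "j < n"
  shows "\<psi> (Eu n j i) y = \<pi> (Eu n j j) (\<psi> (Eu n j i) y)"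
proof -
  define w where "w = \<psi> (Eu n j i) y"
  define z where "z = w - \<pi> (Eu n j j) w"
  have Pz: "\<pi> (Eu n j j) z = 0"
    unfolding z_def bop_diff[OF P_bop] P_P[OF j j] by simp
  have a: "ip w z = 0" using step2[OF i j Pz] unfolding w_def by blast
  have b: "ip (\<pi> (Eu n j j) w) z = 0" unfolding P_sa[OF j] Pz by (rule ip_zero2[OF H])
  have "ip z z = 0" unfolding z_def[of] by (simp add: ip_diff1[OF H] a[unfolded z_def] b[unfolded z_def])
  hence "z = 0" by (rule ip_self_zero[OF H])
  thus ?thesis unfolding z_def w_def by simp
qed

lemma compress:
  assumes L: "linear_into_BH sc ip n \<phi>"
    and cmp: "\<And>a b x. a < n \<Longrightarrow> b < n \<Longrightarrow> \<phi> (Eu n a b) x = \<pi> (Eu n a a) (\<phi> (Eu n a b) (\<pi> (Eu n b b) x))"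
    and T: "T \<in> carrier_mat n n" and i: "i < n" and j: "j < n"
  shows "\<pi> (Eu n i i) (\<phi> T (\<pi> (Eu n j j) x)) = sc (T $$ (i,j)) (\<phi> (Eu n i j) x)"
proof -
  have trm: "\<pi> (Eu n i i) (sc (T $$ p) (\<phi> (Eu n (fst p) (snd p)) (\<pi> (Eu n j j) x))) =
      (if p = (i,j) then sc (T $$ (i,j)) (\<phi> (Eu n i j) x) else 0)" if p: "p \<in> {..<n} \<times> {..<n}" for p
  proof -
    obtain a b where ab: "p = (a,b)" by force
    have a: "a < n" and b: "b < n" using p ab by auto
    have s1: "\<pi> (Eu n i i) (sc (T $$ p) (\<phi> (Eu n a b) (\<pi> (Eu n j j) x))) =
        sc (T $$ p) (\<pi> (Eu n i i) (\<phi> (Eu n a b) (\<pi> (Eu n j j) x)))"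
      by (rule bop_sc[OF P_bop])
    have s2: "\<phi> (Eu n a b) (\<pi> (Eu n j j) x) = \<pi> (Eu n a a) (\<phi> (Eu n a b) (\<pi> (Eu n b b) (\<pi> (Eu n j j) x)))"
      by (rule cmp[OF a b])
    have s3: "\<pi> (Eu n i i) (\<pi> (Eu n a a) (\<phi> (Eu n a b) (\<pi> (Eu n b b) (\<pi> (Eu n j j) x)))) =
       (if a = i \<and> b = j then \<phi> (Eu n i j) x else 0)"
    proof (cases "b = j")
      case False
      then show ?thesis using P_P[OF b j] P_P[OF i a] bop_zero[OF lin_bop[OF H L Eu_carrier]]
        bop_zero[OF P_bop] by simp
    next
      case True
      note bj = this
      show ?thesis
      proof (cases "a = i")
        case False
        then show ?thesis using P_P[OF i a] by simp
      next
        case True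
        have "\<phi> (Eu n i j) x = \<pi> (Eu n i i) (\<phi> (Eu n i j) (\<pi> (Eu n j j) x))" by (rule cmp[OF i j])
        then show ?thesis using True bj P_P[OF i i] P_P[OF j j] by simp
      qed
    qed
    have s4: "\<pi> (Eu n i i) (\<phi> (Eu n a b) (\<pi> (Eu n j j) x)) = (if a = i \<and> b = j then \<phi> (Eu n i j) x else 0)"
      by (subst s2) (rule s3)
    show ?thesis unfolding ab fst_conv snd_conv s1[unfolded ab] s4 using sc_zero2[OF H] by auto
  qed
  have "\<pi> (Eu n i i) (\<phi> T (\<pi> (Eu n j j) x)) =
      (\<Sum>p\<in>{..<n} \<times> {..<n}. \<pi> (Eu n i i) (sc (T $$ p) (\<phi> (Eu n (fst p) (snd p)) (\<pi> (Eu n j j) x))))"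
    unfolding decomp[OF H L T] by (rule bop_sum[OF P_bop]) simp
  also have "\<dots> = (\<Sum>p\<in>{..<n} \<times> {..<n}. if p = (i,j) then sc (T $$ (i,j)) (\<phi> (Eu n i j) x) else 0)"
    by (rule sum.cong[OF refl trm])
  also have "\<dots> = sc (T $$ (i,j)) (\<phi> (Eu n i j) x)" using i j by simp
  finally show ?thesis .
qed

lemma units_agree:
  assumes i: "i < n" and j: "j < n"
  shows "\<psi> (Eu n i j) x = \<pi> (Eu n i j) x"
proof -
  define T where "T = Tm n (\<lambda>d. if d = int i - int j then 1 else 0)"
  have Tc: "T \<in> carrier_mat n n" by (simp add: T_def)
  have Tij: "T $$ (i,j) = 1" using i j by (simp add: T_def Tm_def)
  have TT: "\<psi> T = \<pi> T" unfolding T_def by (rule agree[OF Tm_toep])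
  have cmp\<psi>: "\<psi> (Eu n a b) x = \<pi> (Eu n a a) (\<psi> (Eu n a b) (\<pi> (Eu n b b) x))" if "a < n" "b < n" for a b x
    using R1[OF that, of x] R2[OF that(2,1), of "\<pi> (Eu n b b) x"] by simp
  have "\<psi> (Eu n i j) x = \<pi> (Eu n i i) (\<psi> T (\<pi> (Eu n j j) x))"
    using compress[OF L\<psi> cmp\<psi> Tc i j, of x] Tij sc_one[OF H] by simp
  also have "\<dots> = \<pi> (Eu n i i) (\<pi> T (\<pi> (Eu n j j) x))" by (simp add: TT)
  also have "\<dots> = \<pi> (Eu n i j) x"
    using compress[OF L\<pi> \<pi>_comp Tc i j, of x] Tij sc_one[OF H] by simp
  finally show ?thesis .
qed

lemma all_agree:
  assumes A: "A \<in> carrier_mat n n"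
  shows "\<psi> A = \<pi> A"
proof
  fix x
  show "\<psi> A x = \<pi> A x"
    unfolding decomp[OF H L\<psi> A] decomp[OF H L\<pi> A]
    by (intro sum.cong refl) (auto simp: units_agree)
qed

end



theorem proposition2p3:
  fixes n :: nat
    and sc :: "complex \<Rightarrow> 'h::ab_group_add \<Rightarrow> 'h"
    and ip :: "'h \<Rightarrow> 'h \<Rightarrow> complex"
    and \<pi> :: "complex mat \<Rightarrow> 'h \<Rightarrow> 'h"
  assumes "n \<ge> 2"
    and "complex_hilbert_space sc ip"
    and "mat_representation sc ip n \<pi>"
  shows "unique_extension_property sc ip n (toeplitz_system n) \<pi>"
  unfolding unique_extension_property_def
proof (intro allI impI ballI)
  fix \<psi> and A :: "complex mat"
  assume L: "linear_into_BH sc ip n \<psi>" and CP: "completely_positive sc ip n \<psi>"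
    and ag: "\<forall>A\<in>toeplitz_system n. \<psi> A = \<pi> A" and A: "A \<in> carrier_mat n n"
  show "\<psi> A = \<pi> A"
    by (rule all_agree[OF assms(2) assms(3) L CP _ A]) (use ag in blast)
qed

end
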